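(* Let $\gamma_i\in\mathcal{M}_{k_i}\otimes\mathcal{M}_{k_i}$, $i=1,\dots,n$, be states whose images are not contained in the anti-symmetric subspace of $\mathbb{C}^{k_i}\otimes\mathbb{C}^{k_i}$, and let $S=S(\gamma_1,\dots,\gamma_n)\in\mathcal{M}_{k_1\cdots k_n}\otimes\mathcal{M}_{k_1\cdots k_n}$. Then: (1) $S^\Gamma\ge0$ if and only if $\gamma_i^\Gamma\ge0$ for every $i$; (2) $\mathcal{R}(S^\Gamma)\ge0$ if and only if $\mathcal{R}(\gamma_i^\Gamma)\ge0$ for every $i$; (3) $\mathcal{R}(S)=S$ if and only if $\mathcal{R}(\gamma_i)=\gamma_i$ for every $i$.
   Context: $\mathcal{M}_k$ denotes complex $k\times k$ matrices; $\mathcal{M}_k\otimes\mathcal{M}_m\cong\mathcal{M}_{km}$ via the Kronecker product. A state is a positive semidefinite Hermitian matrix (not necessarily of trace one). The anti-symmetric subspace of $\mathbb{C}^k\otimes\mathbb{C}^k$ is $\{x:F_kx=-x\}$, where $F_k(v\otimes w)=w\otimes v$. Shuffle: if $\gamma_i=\sum_{j=1}^{n_i}A^i_j\otimes B^i_j\in\mathcal{M}_{k_i}\otimes\mathcal{M}_{m_i}$, then $S(\gamma_1,\dots,\gamma_n)=\sum_{j_1,\dots,j_n}A^1_{j_1}\otimes\cdots\otimes A^n_{j_n}\otimes B^1_{j_1}\otimes\cdots\otimes B^n_{j_n}\in\mathcal{M}_{k_1\cdots k_n}\otimes\mathcal{M}_{m_1\cdots m_n}$. Partial transpose: $(\sum_iA_i\otimes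 B_i)^\Gamma=\sum_iA_i\otimes B_i^t$. Realignment on $\mathcal{M}_k\otimes\mathcal{M}_k$: identify $\mathcal{M}_k$ with $\mathbb{C}^k\otimes\mathbb{C}^k$ via $\mathrm{vec}(vw^t)=v\otimes w$ (extended linearly), and set $\mathcal{R}(A\otimes B)=\mathrm{vec}(A)\mathrm{vec}(B)^t$, extended linearly. *)

theory Defs
  imports "Jordan_Normal_Form.Matrix"
begin

text \<open>A state: positive semidefinite Hermitian square matrix (not necessarily trace one).\<close>
definition psd :: "complex mat \<Rightarrow> bool" where
  "psd A \<longleftrightarrow> dim_row A = dim_col A \<and>
     (\<forall>i < dim_row A. \<forall>j < dim_row A. A $$ (i, j) = cnj (A $$ (j, i))) \<and>
     (\<forall>v \<in> carrier_vec (dim_row A).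
        0 \<le> Re (\<Sum>i < dim_row A. \<Sum>j < dim_row A. cnj (v $ i) * A $$ (i, j) * v $ j))"

text \<open>Anti-symmetric subspace of C^k (x) C^k, with e_a (x) e_b = e_(a*k+b).\<close>
definition antisym_subspace :: "nat \<Rightarrow> complex vec set" where
  "antisym_subspace k = {x \<in> carrier_vec (k * k).
     \<forall>a < k. \<forall>b < k. x $ (b * k + a) = - (x $ (a * k + b))}"

definition mat_image :: "complex mat \<Rightarrow> complex vec set" where
  "mat_image A = {A *\<^sub>v v | v. v \<in> carrier_vec (dim_col A)}"

text \<open>Partial transpose on M_k (x) M_m (identified with M_(km) via Kronecker product).\<close>
definition ptrans :: "nat \<Rightarrow> complex mat \<Rightarrow> complex mat" where
  "ptrans m X = mat (dim_row X) (dim_col X)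
     (\<lambda>(i, j). X $$ ((i div m) * m + j mod m, (j div m) * m + i mod m))"

text \<open>Realignment on M_k (x) M_k: R(E_ab (x) E_cd) = E_(ak+b, ck+d).\<close>
definition realign :: "nat \<Rightarrow> complex mat \<Rightarrow> complex mat" where
  "realign k X = mat (k * k) (k * k)
     (\<lambda>(i, j). X $$ ((i div k) * k + j div k, (i mod k) * k + j mod k))"

text \<open>Mixed-radix digit i (factor i, first factor most significant) of an index
  into C^(k_0) (x) ... (x) C^(k_(n-1)).\<close>
definition digit :: "(nat \<Rightarrow> nat) \<Rightarrow> nat \<Rightarrow> nat \<Rightarrow> nat \<Rightarrow> nat" where
  "digit k n i x = (x div (\<Prod>j \<in> {i<..<n}. k j)) mod k i"

text \<open>Shuffle S(g_0,...,g_(n-1)) with g_i in M_(k_i) (x) M_(k_i); the result lies in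
  M_K (x) M_K with K = k_0 * ... * k_(n-1). Entrywise unfolding of
  sum A^1 (x) ... (x) A^n (x) B^1 (x) ... (x) B^n.\<close>
definition shuffle :: "nat \<Rightarrow> (nat \<Rightarrow> nat) \<Rightarrow> (nat \<Rightarrow> complex mat) \<Rightarrow> complex mat" where
  "shuffle n k g = (let K = (\<Prod>i<n. k i) in
     mat (K * K) (K * K) (\<lambda>(r, c).
       \<Prod>i<n. g i $$ (digit k n i (r div K) * k i + digit k n i (r mod K),
                      digit k n i (c div K) * k i + digit k n i (c mod K))))"

end

theory Submission imports Defs "HOL-Library.FuncSet" begin

definition Q :: "nat \<Rightarrow> (nat \<Rightarrow> nat \<Rightarrow> complex) \<Rightarrow> (nat \<Rightarrow> complex) \<Rightarrow> complex" where
  "Q m M x = (\<Sum>i<m. \<Sum>j<m. cnj (x i) * M i j * x j)"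

definition fpsd :: "nat \<Rightarrow> (nat \<Rightarrow> nat \<Rightarrow> complex) \<Rightarrow> bool" where
  "fpsd m M \<longleftrightarrow> (\<forall>i<m. \<forall>j<m. M i j = cnj (M j i)) \<and> (\<forall>x. 0 \<le> Re (Q m M x))"

lemma Q_cong: "(\<And>i j. i < m \<Longrightarrow> j < m \<Longrightarrow> M i j = M' i j) \<Longrightarrow>
   (\<And>i. i < m \<Longrightarrow> x i = x' i) \<Longrightarrow> Q m M x = Q m M' x'"
  unfolding Q_def by (intro sum.cong refl) auto

lemma fpsd_cong: "(\<And>i j. i < m \<Longrightarrow> j < m \<Longrightarrow> M i j = M' i j) \<Longrightarrow> fpsd m M \<longleftrightarrow> fpsd m M'"
  unfolding fpsd_def using Q_cong[of m M M' x x for x] by auto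

lemma psd_fpsd:
  assumes "A \<in> carrier_mat m m"
  shows "psd A \<longleftrightarrow> fpsd m (\<lambda>i j. A $$ (i, j))"
proof -
  have 1: "(\<forall>v \<in> carrier_vec m. 0 \<le> Re (\<Sum>i < m. \<Sum>j < m. cnj (v $ i) * A $$ (i, j) * v $ j))
     \<longleftrightarrow> (\<forall>x. 0 \<le> Re (Q m (\<lambda>i j. A $$ (i, j)) x))"
  proof
    assume H: "\<forall>v \<in> carrier_vec m. 0 \<le> Re (\<Sum>i < m. \<Sum>j < m. cnj (v $ i) * A $$ (i, j) * v $ j)"
    show "\<forall>x. 0 \<le> Re (Q m (\<lambda>i j. A $$ (i, j)) x)"
    proof
      fix x
      have "Q m (\<lambda>i j. A $$ (i, j)) x = (\<Sum>i < m. \<Sum>j < m. cnj (vec m x $ i) * A $$ (i, j) * vec m x $ j)"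
        unfolding Q_def by (intro sum.cong refl) auto
      moreover have "vec m x \<in> carrier_vec m" by simp
      then have "0 \<le> Re (\<Sum>i < m. \<Sum>j < m. cnj (vec m x $ i) * A $$ (i, j) * vec m x $ j)"
        using H by blast
      ultimately show "0 \<le> Re (Q m (\<lambda>i j. A $$ (i, j)) x)" by (simp only:)
    qed
  next
    assume H: "\<forall>x. 0 \<le> Re (Q m (\<lambda>i j. A $$ (i, j)) x)"
    show "\<forall>v \<in> carrier_vec m. 0 \<le> Re (\<Sum>i < m. \<Sum>j < m. cnj (v $ i) * A $$ (i, j) * v $ j)"
    proof
      fix v :: "complex vec"
      show "0 \<le> Re (\<Sum>i < m. \<Sum>j < m. cnj (v $ i) * A $$ (i, j) * v $ j)"
        using H[rule_format, of "\<lambda>i. v $ i"] unfolding Q_def .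
    qed
  qed
  have d: "dim_row A = m" "dim_col A = m" using assms by auto
  show ?thesis unfolding psd_def fpsd_def d 1 by simp
qed

lemma Q_one:
  assumes "p < m" "\<And>i. i \<noteq> p \<Longrightarrow> x i = 0"
  shows "Q m M x = cnj (x p) * M p p * x p"
proof -
  have "Q m M x = (\<Sum>i<m. if i = p then (\<Sum>j<m. cnj (x i) * M i j * x j) else 0)"
    unfolding Q_def by (intro sum.cong refl) (auto simp: assms)
  also have "\<dots> = (\<Sum>j<m. cnj (x p) * M p j * x j)" using assms by simp
  also have "\<dots> = (\<Sum>j<m. if j = p then cnj (x p) * M p j * x j else 0)"
    by (intro sum.cong refl) (auto simp: assms)
  also have "\<dots> = cnj (x p) * M p p * x p" using assms by simp
  finally show ?thesis .
qed

lemma Q_two: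
  assumes "p < m" "q < m" "p \<noteq> q" "\<And>i. i \<noteq> p \<Longrightarrow> i \<noteq> q \<Longrightarrow> x i = 0"
  shows "Q m M x = cnj (x p) * M p p * x p + cnj (x p) * M p q * x q
                 + cnj (x q) * M q p * x p + cnj (x q) * M q q * x q"
proof -
  have s: "(\<Sum>i<m. f i) = (\<Sum>i\<in>{p,q}. f i)" if "\<And>i. i \<noteq> p \<Longrightarrow> i \<noteq> q \<Longrightarrow> f i = 0" for f
    using that assms(1,2) by (intro sum.mono_neutral_right) auto
  have "Q m M x = (\<Sum>i\<in>{p,q}. \<Sum>j<m. cnj (x i) * M i j * x j)"
    unfolding Q_def by (rule s) (auto simp: assms)
  also have "\<dots> = (\<Sum>i\<in>{p,q}. \<Sum>j\<in>{p,q}. cnj (x i) * M i j * x j)"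
    by (intro sum.cong refl s) (auto simp: assms)
  also have "\<dots> = (cnj (x p) * M p p * x p + cnj (x p) * M p q * x q)
                 + (cnj (x q) * M q p * x p + cnj (x q) * M q q * x q)"
    using assms(3) by simp
  finally show ?thesis by (simp only: add.assoc)
qed

lemma Q_real_herm:
  assumes "\<forall>i<m. \<forall>j<m. M i j = cnj (M j i)"
  shows "Im (Q m M x) = 0"
proof -
  have "cnj (Q m M x) = (\<Sum>i<m. \<Sum>j<m. x i * cnj (M i j) * cnj (x j))"
    unfolding Q_def cnj_sum by simp
  also have "\<dots> = (\<Sum>i<m. \<Sum>j<m. x i * M j i * cnj (x j))"
    using assms by (intro sum.cong refl) (metis complex_cnj_cnj lessThan_iff)
  also have "\<dots> = (\<Sum>j<m. \<Sum>i<m. x i * M j i * cnj (x j))" by (rule sum.swap)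
  also have "\<dots> = Q m M x" unfolding Q_def by (intro sum.cong refl) (simp add: algebra_simps)
  finally show ?thesis by (metis Reals_cnj_iff complex_is_Real_iff)
qed

lemma herm_diag_real: "(z::complex) = cnj z \<Longrightarrow> z = complex_of_real (Re z)"
proof -
  assume a: "z = cnj z"
  have "Im z = 0" using arg_cong[OF a, of Im] by simp
  then have "z \<in> \<real>" by (simp add: complex_is_Real_iff)
  then show ?thesis by (rule of_real_Re[symmetric])
qed

lemma fpsd_diag:
  assumes "fpsd m M" "p < m"
  shows "M p p = complex_of_real (Re (M p p))" "0 \<le> Re (M p p)"
proof -
  have "M p p = cnj (M p p)" using assms unfolding fpsd_def by blast
  then show "M p p = complex_of_real (Re (M p p))" by (rule herm_diag_real)
  have "Q m M (\<lambda>i. if i = p then 1 else 0) = M p p" using assms(2) by (subst Q_one[of p]) auto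
  moreover have "0 \<le> Re (Q m M (\<lambda>i. if i = p then 1 else 0))" using assms unfolding fpsd_def by blast
  ultimately show "0 \<le> Re (M p p)" by simp
qed

lemma Q_Suc: "Q (Suc m) M x = Q m M x + (\<Sum>i<m. cnj (x i) * M i m) * x m
   + cnj (x m) * (\<Sum>j<m. M m j * x j) + cnj (x m) * M m m * x m"
proof -
  have "Q (Suc m) M x = (\<Sum>i<m. (\<Sum>j<m. cnj (x i) * M i j * x j) + cnj (x i) * M i m * x m)
      + ((\<Sum>j<m. cnj (x m) * M m j * x j) + cnj (x m) * M m m * x m)"
    unfolding Q_def by simp
  also have "\<dots> = Q m M x + (\<Sum>i<m. cnj (x i) * M i m * x m)
      + (\<Sum>j<m. cnj (x m) * M m j * x j) + cnj (x m) * M m m * x m"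
    unfolding Q_def sum.distrib by simp
  moreover have ea: "(\<Sum>i<m. cnj (x i) * M i m * x m) = (\<Sum>i<m. cnj (x i) * M i m) * x m"
    by (rule sum_distrib_right[symmetric])
  moreover have eb: "(\<Sum>j<m. cnj (x m) * M m j * x j) = cnj (x m) * (\<Sum>j<m. M m j * x j)"
    unfolding sum_distrib_left by (simp only: mult.assoc)
  ultimately show ?thesis by (simp only:)
qed

lemma fpsd_Suc: "fpsd (Suc m) M \<Longrightarrow> fpsd m M"
proof -
  assume H: "fpsd (Suc m) M"
  { fix x
    have "Q m M x = Q m M (x(m := 0))" by (rule Q_cong) auto
    also have "\<dots> = Q (Suc m) M (x(m := 0))" unfolding Q_Suc by simp
    finally have e: "Q m M x = Q (Suc m) M (x(m := 0))" .
    have "0 \<le> Re (Q (Suc m) M (x(m := 0)))" using H unfolding fpsd_def by blast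
    then have "0 \<le> Re (Q m M x)" unfolding e . }
  moreover have "\<forall>i<m. \<forall>j<m. M i j = cnj (M j i)" using H unfolding fpsd_def by (meson less_SucI)
  ultimately show ?thesis unfolding fpsd_def by blast
qed


lemma fpsd_zero_diag:
  assumes "fpsd m M" "p < m" "q < m" "M q q = 0"
  shows "M p q = 0"
proof (rule ccontr)
  assume b0: "M p q \<noteq> 0"
  then have pq: "p \<noteq> q" using assms(4) by auto
  define b where "b = M p q"
  have bq: "M q p = cnj b" using assms(1,2,3) unfolding fpsd_def b_def by blast
  define s :: real where "s = (Re (M p p) + 1) / (2 * (cmod b)^2)"
  have nb: "cmod b > 0" using b0 b_def by auto
  define x where "x = (\<lambda>i. if i = p then 1 else if i = q then - of_real s * cnj b else (0::complex))"
  have "Q m M x = M p p + b * (- of_real s * cnj b) + cnj (- of_real s * cnj b) * cnj b"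
    using assms(2,3,4) pq by (subst Q_two[of p m q]) (auto simp: x_def b_def bq)
  also have "\<dots> = M p p - 2 * of_real s * (b * cnj b)" by (simp add: algebra_simps)
  also have "b * cnj b = of_real ((cmod b)^2)" by (metis complex_norm_square)
  finally have "Re (Q m M x) = Re (M p p) - 2 * s * (cmod b)^2" by simp
  also have "\<dots> = -1" unfolding s_def using nb by (simp add: field_simps)
  finally have "Re (Q m M x) = -1" .
  moreover have "0 \<le> Re (Q m M x)" using assms(1) unfolding fpsd_def by blast
  ultimately show False by simp
qed

lemma fpsd_decomp: "fpsd m M \<Longrightarrow> \<exists>(N::nat) v. \<forall>p<m. \<forall>q<m. M p q = (\<Sum>j<N. v j p * cnj (v j q))"
proof (induction m arbitrary: M)
  case 0
  show ?case by auto
next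
  case (Suc m)
  have H: "fpsd (Suc m) M" by fact
  have herm: "\<And>i j. i < Suc m \<Longrightarrow> j < Suc m \<Longrightarrow> M i j = cnj (M j i)"
    using H unfolding fpsd_def by blast
  show ?case
  proof (cases "M m m = 0")
    case True
    have z: "M p m = 0" if "p < Suc m" for p using fpsd_zero_diag[OF H that _ True] by simp
    have z': "M m p = 0" if "p < Suc m" for p
    proof -
      have "M m p = cnj (M p m)" using herm[of m p] that by simp
      then show ?thesis using z[OF that] by simp
    qed
    obtain N :: nat and v where v: "\<forall>p<m. \<forall>q<m. M p q = (\<Sum>j<N. v j p * cnj (v j q))"
      using Suc.IH[OF fpsd_Suc[OF H]] by blast
    define v' where "v' j = (v j)(m := 0)" for j
    have "\<forall>p<Suc m. \<forall>q<Suc m. M p q = (\<Sum>j<N. v' j p * cnj (v' j q))"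
    proof (intro allI impI)
      fix p q assume p: "p < Suc m" and q: "q < Suc m"
      show "M p q = (\<Sum>j<N. v' j p * cnj (v' j q))"
      proof (cases "p = m \<or> q = m")
        case True then show ?thesis using z z' p q by (auto simp: v'_def)
      next
        case False then have "p < m" "q < m" using p q by auto
        then show ?thesis using v False by (simp add: v'_def)
      qed
    qed
    then show ?thesis by blast
  next
    case False
    define d where "d = Re (M m m)"
    have dd: "M m m = of_real d" using fpsd_diag(1)[OF H] unfolding d_def by simp
    have "d \<ge> 0" using fpsd_diag(2)[OF H] unfolding d_def by simp
    moreover have "d \<noteq> 0" using False dd by auto
    ultimately have d0: "d > 0" by simp
    define a where "a p = M p m" for p
    define M' where "M' p q = M p q - a p * cnj (a q) / of_real d" for p q
    have fM': "fpsd m M'"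
      unfolding fpsd_def
    proof (intro conjI allI impI)
      fix i j assume i: "i < m" and j: "j < m"
      have e: "M i j = cnj (M j i)" using herm[of i j] i j by simp
      show "M' i j = cnj (M' j i)" unfolding M'_def by (simp add: e mult.commute)
    next
      fix x
      define s where "s = (\<Sum>j<m. M m j * x j)"
      define y where "y = x(m := - s / of_real d)"
      have cs: "(\<Sum>i<m. cnj (x i) * M i m) = cnj s"
        unfolding s_def cnj_sum
      proof (intro sum.cong refl)
        fix i assume "i \<in> {..<m}"
        then have "M i m = cnj (M m i)" using herm[of i m] by simp
        then show "cnj (x i) * M i m = cnj (M m i * x i)" by (simp add: mult.commute)
      qed
      have sa: "(\<Sum>j<m. cnj (a j) * x j) = s"
        unfolding s_def a_def
      proof (intro sum.cong refl)
        fix j assume "j \<in> {..<m}"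
        then have "M m j = cnj (M j m)" using herm[of m j] by simp
        then show "cnj (M j m) * x j = M m j * x j" by simp
      qed
      have "Q m M' x = (\<Sum>i<m. \<Sum>j<m. cnj (x i) * M i j * x j - (cnj (x i) * a i) * (cnj (a j) * x j) / of_real d)"
        unfolding Q_def M'_def by (intro sum.cong refl) (simp add: algebra_simps)
      also have "\<dots> = Q m M x - (\<Sum>i<m. cnj (x i) * a i) * (\<Sum>j<m. cnj (a j) * x j) / of_real d"
        unfolding Q_def sum_subtractf sum_product sum_divide_distrib by simp
      also have "\<dots> = Q m M x - cnj s * s / of_real d" using cs sa unfolding a_def by simp
      finally have e1: "Q m M' x = Q m M x - cnj s * s / of_real d" .
      have e2: "Q (Suc m) M y = Q m M x + cnj s * (- s / of_real d) + cnj (- s / of_real d) * s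
          + cnj (- s / of_real d) * of_real d * (- s / of_real d)"
      proof -
        have "Q m M y = Q m M x" by (rule Q_cong) (auto simp: y_def)
        moreover have "(\<Sum>i<m. cnj (y i) * M i m) = cnj s" using cs by (simp add: y_def)
        moreover have "(\<Sum>j<m. M m j * y j) = s" unfolding s_def by (intro sum.cong refl) (auto simp: y_def)
        ultimately show ?thesis unfolding Q_Suc by (simp add: y_def dd)
      qed
      have "Q (Suc m) M y = Q m M x - cnj s * s / of_real d"
        unfolding e2 using d0 by (simp add: field_simps)
      then have "Q m M' x = Q (Suc m) M y" using e1 by simp
      moreover have "0 \<le> Re (Q (Suc m) M y)" using H unfolding fpsd_def by blast
      ultimately show "0 \<le> Re (Q m M' x)" by simp
    qed
    obtain N :: nat and v where v: "\<forall>p<m. \<forall>q<m. M' p q = (\<Sum>j<N. v j p * cnj (v j q))"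
      using Suc.IH[OF fM'] by blast
    define r where "r = complex_of_real (sqrt d)"
    have rr: "r * cnj r = of_real d" using d0 unfolding r_def
      by (simp flip: of_real_mult)
    define w where "w j = (if j < N then (v j)(m := 0) else (\<lambda>p. a p / r))" for j
    have am: "a m = of_real d" unfolding a_def using dd .
    have "\<forall>p<Suc m. \<forall>q<Suc m. M p q = (\<Sum>j<Suc N. w j p * cnj (w j q))"
    proof (intro allI impI)
      fix p q assume p: "p < Suc m" and q: "q < Suc m"
      have last: "w N p * cnj (w N q) = a p * cnj (a q) / of_real d"
        unfolding w_def using rr by (simp add: field_simps)
      have "(\<Sum>j<Suc N. w j p * cnj (w j q)) = (\<Sum>j<N. ((v j)(m := 0)) p * cnj (((v j)(m := 0)) q))
          + a p * cnj (a q) / of_real d"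
        using last by (simp add: w_def)
      also have "\<dots> = M p q"
      proof (cases "p = m \<or> q = m")
        case True
        then show ?thesis
        proof
          assume pm: "p = m"
          have "M m q = cnj (a q)" unfolding a_def using herm[of m q] q by simp
          then show ?thesis using pm am d0 by simp
        next
          assume qm: "q = m"
          show ?thesis using qm am d0 unfolding a_def by simp
        qed
      next
        case False then have pq: "p < m" "q < m" using p q by auto
        then have "(\<Sum>j<N. ((v j)(m := 0)) p * cnj (((v j)(m := 0)) q)) = M' p q" using v by simp
        then show ?thesis unfolding M'_def by simp
      qed
      finally show "M p q = (\<Sum>j<Suc N. w j p * cnj (w j q))" by simp
    qed
    then show ?thesis by blast
  qed
qed


definition TP :: "nat \<Rightarrow> (nat \<Rightarrow> nat \<Rightarrow> nat) \<Rightarrow> (nat \<Rightarrow> nat \<Rightarrow> nat \<Rightarrow> complex) \<Rightarrow> nat \<Rightarrow> nat \<Rightarrow> complex" where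
  "TP n s M r c = (\<Prod>i<n. M i (s i r) (s i c))"

lemma polarization:
  assumes "\<forall>x. Im (Q m M x) = 0" "p < m" "q < m"
  shows "M p q = cnj (M q p)"
proof (cases "p = q")
  case True
  have "Q m M (\<lambda>i. if i = p then 1 else 0) = M p p" using assms(2) by (subst Q_one[of p]) auto
  moreover have "Im (Q m M (\<lambda>i. if i = p then 1 else 0)) = 0" using assms(1) by blast
  ultimately have "Im (M p p) = 0" by simp
  then show ?thesis using True by (simp add: complex_eq_iff)
next
  case False
  have d1: "Im (M p p) = 0" "Im (M q q) = 0"
  proof -
    have "Q m M (\<lambda>i. if i = p then 1 else 0) = M p p" using assms(2) by (subst Q_one[of p]) auto
    moreover have "Im (Q m M (\<lambda>i. if i = p then 1 else 0)) = 0" using assms(1) by blast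
    ultimately show "Im (M p p) = 0" by simp
    have "Q m M (\<lambda>i. if i = q then 1 else 0) = M q q" using assms(3) by (subst Q_one[of q]) auto
    moreover have "Im (Q m M (\<lambda>i. if i = q then 1 else 0)) = 0" using assms(1) by blast
    ultimately show "Im (M q q) = 0" by simp
  qed
  have "Q m M (\<lambda>i. if i = p \<or> i = q then 1 else 0) = M p p + M p q + M q p + M q q"
    using assms(2,3) False by (subst Q_two[of p m q]) auto
  moreover have "Im (Q m M (\<lambda>i. if i = p \<or> i = q then 1 else 0)) = 0" using assms(1) by blast
  ultimately have e1: "Im (M p q) + Im (M q p) = 0" using d1 by simp
  have "Q m M (\<lambda>i. if i = p then 1 else if i = q then \<i> else 0) = M p p + \<i> * M p q - \<i> * M q p + M q q"
    using assms(2,3) False by (subst Q_two[of p m q]) (auto simp: algebra_simps)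
  then have e2: "Re (M p q) - Re (M q p) = 0" using assms(1)[rule_format, of "\<lambda>i. if i = p then 1 else if i = q then \<i> else 0"] d1 by simp
  show ?thesis using e1 e2 by (simp add: complex_eq_iff)
qed

lemma tensor_psd:
  assumes sm: "\<forall>i<n. \<forall>r<R. s i r < m i" and ps: "\<forall>i<n. fpsd (m i) (M i)"
  shows "fpsd R (TP n s M)"
proof -
  have "\<forall>i. \<exists>Nv. i < n \<longrightarrow> (\<forall>p<m i. \<forall>q<m i. M i p q = (\<Sum>j<(fst Nv::nat). snd Nv j p * cnj (snd Nv j q)))"
  proof
    fix i
    show "\<exists>Nv. i < n \<longrightarrow> (\<forall>p<m i. \<forall>q<m i. M i p q = (\<Sum>j<(fst Nv::nat). snd Nv j p * cnj (snd Nv j q)))"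
    proof (cases "i < n")
      case True
      then obtain N :: nat and v where "\<forall>p<m i. \<forall>q<m i. M i p q = (\<Sum>j<N. v j p * cnj (v j q))"
        using fpsd_decomp[of "m i" "M i"] ps by blast
      then show ?thesis by (intro exI[of _ "(N, v)"]) simp
    qed simp
  qed
  then obtain f where f: "\<forall>i. i < n \<longrightarrow> (\<forall>p<m i. \<forall>q<m i. M i p q = (\<Sum>j<(fst (f i)::nat). snd (f i) j p * cnj (snd (f i) j q)))"
    by metis
  define N where "N i = fst (f i)" for i
  define v where "v i = snd (f i)" for i
  have dec: "M i p q = (\<Sum>j<N i. v i j p * cnj (v i j q))" if "i < n" "p < m i" "q < m i" for i p q
    using f that unfolding N_def v_def by blast
  define P where "P = PiE {..<n} (\<lambda>i. {..<N i})"
  define \<alpha> where "\<alpha> g r = (\<Prod>i<n. v i (g i) (s i r))" for g r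
  have TPe: "TP n s M r c = (\<Sum>g\<in>P. \<alpha> g r * cnj (\<alpha> g c))" if "r < R" "c < R" for r c
  proof -
    have "TP n s M r c = (\<Prod>i<n. \<Sum>j<N i. v i j (s i r) * cnj (v i j (s i c)))"
      unfolding TP_def using that sm by (intro prod.cong refl dec) auto
    also have "\<dots> = (\<Sum>g\<in>P. \<Prod>i<n. v i (g i) (s i r) * cnj (v i (g i) (s i c)))"
      unfolding P_def by (rule prod_sum_PiE) auto
    also have "\<dots> = (\<Sum>g\<in>P. \<alpha> g r * cnj (\<alpha> g c))"
      unfolding \<alpha>_def cnj_prod prod.distrib by simp
    finally show ?thesis .
  qed
  show ?thesis unfolding fpsd_def
  proof (intro conjI allI impI)
    fix r c assume r: "r < R" and c: "c < R"
    have "TP n s M r c = (\<Prod>i<n. cnj (M i (s i c) (s i r)))"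
      unfolding TP_def
    proof (intro prod.cong refl)
      fix i assume "i \<in> {..<n}"
      then show "M i (s i r) (s i c) = cnj (M i (s i c) (s i r))"
        using ps sm r c unfolding fpsd_def by blast
    qed
    then show "TP n s M r c = cnj (TP n s M c r)" unfolding cnj_prod by (simp add: TP_def)
  next
    fix x
    define \<beta> where "\<beta> g = (\<Sum>c<R. cnj (\<alpha> g c) * x c)" for g
    have "Q R (TP n s M) x = (\<Sum>r<R. \<Sum>c<R. \<Sum>g\<in>P. cnj (x r) * (\<alpha> g r * cnj (\<alpha> g c)) * x c)"
      unfolding Q_def by (intro sum.cong refl) (simp add: TPe sum_distrib_left sum_distrib_right)
    also have "\<dots> = (\<Sum>r<R. \<Sum>g\<in>P. \<Sum>c<R. cnj (x r) * (\<alpha> g r * cnj (\<alpha> g c)) * x c)"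
      by (intro sum.cong refl) (rule sum.swap)
    also have "\<dots> = (\<Sum>g\<in>P. \<Sum>r<R. \<Sum>c<R. cnj (x r) * (\<alpha> g r * cnj (\<alpha> g c)) * x c)"
      by (rule sum.swap)
    also have "\<dots> = (\<Sum>g\<in>P. cnj (\<beta> g) * \<beta> g)"
      unfolding \<beta>_def cnj_sum sum_product by (intro sum.cong refl) (simp add: algebra_simps)
    finally have e: "Q R (TP n s M) x = (\<Sum>g\<in>P. cnj (\<beta> g) * \<beta> g)" .
    have "Re (\<Sum>g\<in>P. cnj (\<beta> g) * \<beta> g) = (\<Sum>g\<in>P. Re (cnj (\<beta> g) * \<beta> g))" by (rule Re_sum)
    also have "\<dots> \<ge> 0" by (intro sum_nonneg) (simp add: mult.commute[of "cnj _"] complex_mult_cnj)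
    finally show "0 \<le> Re (Q R (TP n s M) x)" unfolding e by simp
  qed
qed

lemma Q_TP_prod:
  assumes bij: "bij_betw (\<lambda>r. restrict (\<lambda>i. s i r) {..<n}) {..<R} (PiE {..<n} (\<lambda>i. {..<m i}))"
  shows "Q R (TP n s M) (\<lambda>r. \<Prod>i<n. W i (s i r)) = (\<Prod>i<n. Q (m i) (M i) (W i))"
proof -
  define P where "P = PiE {..<n} (\<lambda>i. {..<m i})"
  define \<sigma> where "\<sigma> r = restrict (\<lambda>i. s i r) {..<n}" for r
  define h where "h i a b = cnj (W i a) * M i a b * W i b" for i a b
  define G where "G f g = (\<Prod>i<n. h i (f i) (g i))" for f g
  have bij': "bij_betw \<sigma> {..<R} P" using bij unfolding \<sigma>_def P_def .
  have "Q R (TP n s M) (\<lambda>r. \<Prod>i<n. W i (s i r)) = (\<Sum>r<R. \<Sum>c<R. G (\<sigma> r) (\<sigma> c))"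
    unfolding Q_def TP_def G_def h_def \<sigma>_def cnj_prod
    by (intro sum.cong refl) (simp add: prod.distrib[symmetric])
  also have "\<dots> = (\<Sum>r<R. \<Sum>g\<in>P. G (\<sigma> r) g)"
    by (intro sum.cong refl sum.reindex_bij_betw[OF bij'])
  also have "\<dots> = (\<Sum>f\<in>P. \<Sum>g\<in>P. G f g)"
    by (rule sum.reindex_bij_betw[OF bij'])
  also have "\<dots> = (\<Prod>i<n. Q (m i) (M i) (W i))"
  proof -
    have "(\<Prod>i<n. Q (m i) (M i) (W i)) = (\<Prod>i<n. \<Sum>a<m i. \<Sum>b<m i. h i a b)"
      unfolding Q_def h_def ..
    also have "\<dots> = (\<Sum>f\<in>P. \<Prod>i<n. \<Sum>b<m i. h i (f i) b)"
      unfolding P_def by (rule prod_sum_PiE) auto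
    also have "\<dots> = (\<Sum>f\<in>P. \<Sum>g\<in>P. G f g)"
      unfolding P_def G_def by (intro sum.cong refl prod_sum_PiE) auto
    finally show ?thesis by simp
  qed
  finally show ?thesis .
qed


lemma tensor_psd_rev:
  assumes bij: "bij_betw (\<lambda>r. restrict (\<lambda>i. s i r) {..<n}) {..<R} (PiE {..<n} (\<lambda>i. {..<m i}))"
    and w: "\<forall>i<n. Im (Q (m i) (M i) (w i)) = 0 \<and> 0 < Re (Q (m i) (M i) (w i))"
    and T: "fpsd R (TP n s M)" and i0: "i0 < n"
  shows "fpsd (m i0) (M i0)"
proof -
  define c where "c = (\<Prod>i\<in>{..<n}-{i0}. Re (Q (m i) (M i) (w i)))"
  have c0: "c > 0" unfolding c_def using w by (intro prod_pos) auto
  have key: "Im (Q (m i0) (M i0) v) = 0 \<and> 0 \<le> Re (Q (m i0) (M i0) v)" for v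
  proof -
    define W where "W i = (if i = i0 then v else w i)" for i
    define QT where "QT = Q R (TP n s M) (\<lambda>r. \<Prod>i<n. W i (s i r))"
    have "QT = (\<Prod>i<n. Q (m i) (M i) (W i))" unfolding QT_def by (rule Q_TP_prod[OF bij])
    also have "\<dots> = Q (m i0) (M i0) (W i0) * (\<Prod>i\<in>{..<n}-{i0}. Q (m i) (M i) (W i))"
      using i0 by (subst prod.remove[of _ i0]) auto
    also have "(\<Prod>i\<in>{..<n}-{i0}. Q (m i) (M i) (W i)) = (\<Prod>i\<in>{..<n}-{i0}. complex_of_real (Re (Q (m i) (M i) (w i))))"
    proof (intro prod.cong refl)
      fix i assume i: "i \<in> {..<n}-{i0}"
      then have "Im (Q (m i) (M i) (w i)) = 0" using w by auto
      then show "Q (m i) (M i) (W i) = complex_of_real (Re (Q (m i) (M i) (w i)))"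
        using i unfolding W_def by (simp add: complex_eq_iff)
    qed
    also have "\<dots> = complex_of_real c" unfolding c_def of_real_prod ..
    finally have e: "QT = Q (m i0) (M i0) v * complex_of_real c" by (simp add: W_def)
    have herm: "\<forall>i<R. \<forall>j<R. TP n s M i j = cnj (TP n s M j i)" using T unfolding fpsd_def by blast
    have "Im QT = 0" unfolding QT_def by (rule Q_real_herm[OF herm])
    moreover have "0 \<le> Re QT" using T unfolding fpsd_def QT_def by blast
    moreover have "Q (m i0) (M i0) v = QT / complex_of_real c" using e c0 by simp
    ultimately show ?thesis using c0 by simp
  qed
  show ?thesis unfolding fpsd_def
  proof (intro conjI allI impI)
    fix i j assume "i < m i0" "j < m i0"
    then show "M i0 i j = cnj (M i0 j i)" using key by (intro polarization) auto
  next
    fix x show "0 \<le> Re (Q (m i0) (M i0) x)" using key by blast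
  qed
qed

lemma TP_scalar:
  assumes bij: "bij_betw (\<lambda>r. restrict (\<lambda>i. s i r) {..<n}) {..<R} (PiE {..<n} (\<lambda>i. {..<m i}))"
    and p: "\<forall>i<n. p i < m i \<and> G i (p i) (p i) \<noteq> 0"
    and eq: "\<forall>r<R. \<forall>c<R. TP n s H r c = TP n s G r c"
    and i0: "i0 < n"
  shows "\<exists>z. z \<noteq> 0 \<and> (\<forall>a<m i0. \<forall>b<m i0. H i0 a b = z * G i0 a b)"
proof -
  define P where "P = PiE {..<n} (\<lambda>i. {..<m i})"
  have surj: "\<exists>r<R. \<forall>i<n. s i r = f i" if "f \<in> P" for f
  proof -
    have "f \<in> (\<lambda>r. restrict (\<lambda>i. s i r) {..<n}) ` {..<R}" using bij that unfolding P_def bij_betw_def by simp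
    then obtain r where "r < R" "f = restrict (\<lambda>i. s i r) {..<n}" by auto
    then show ?thesis by auto
  qed
  have val: "(\<And>i. i < n \<Longrightarrow> a0 i < m i) \<Longrightarrow> (\<And>i. i < n \<Longrightarrow> b0 i < m i) \<Longrightarrow>
      (\<Prod>i<n. H i (a0 i) (b0 i)) = (\<Prod>i<n. G i (a0 i) (b0 i))" for a0 b0
  proof -
    assume a0: "\<And>i. i < n \<Longrightarrow> a0 i < m i" and b0: "\<And>i. i < n \<Longrightarrow> b0 i < m i"
    have "restrict a0 {..<n} \<in> P" "restrict b0 {..<n} \<in> P" unfolding P_def using a0 b0 by auto
    then obtain r c where r: "r < R" "\<forall>i<n. s i r = restrict a0 {..<n} i"
      and c: "c < R" "\<forall>i<n. s i c = restrict b0 {..<n} i" using surj by meson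
    have "(\<Prod>i<n. H i (a0 i) (b0 i)) = TP n s H r c" unfolding TP_def using r c by (intro prod.cong) auto
    also have "\<dots> = TP n s G r c" using eq r c by blast
    also have "\<dots> = (\<Prod>i<n. G i (a0 i) (b0 i))" unfolding TP_def using r c by (intro prod.cong) auto
    finally show ?thesis .
  qed
  define A where "A = {..<n} - {i0}"
  have fA: "finite A" "i0 \<notin> A" unfolding A_def by auto
  have nA: "{..<n} = insert i0 A" unfolding A_def using i0 by auto
  define PH where "PH = (\<Prod>i\<in>A. H i (p i) (p i))"
  define PG where "PG = (\<Prod>i\<in>A. G i (p i) (p i))"
  have PG0: "PG \<noteq> 0" unfolding PG_def using p A_def by (simp add: prod_zero_iff fA)
  have gen: "H i0 a b * PH = G i0 a b * PG" if "a < m i0" "b < m i0" for a b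
  proof -
    have "(\<Prod>i<n. H i ((p(i0 := a)) i) ((p(i0 := b)) i)) = (\<Prod>i<n. G i ((p(i0 := a)) i) ((p(i0 := b)) i))"
      using p that by (intro val) auto
    moreover have "(\<Prod>i\<in>A. H i ((p(i0 := a)) i) ((p(i0 := b)) i)) = PH"
      unfolding PH_def using fA(2) by (intro prod.cong refl) auto
    then have "(\<Prod>i<n. H i ((p(i0 := a)) i) ((p(i0 := b)) i)) = H i0 a b * PH"
      unfolding nA using fA by (simp add: prod.insert)
    moreover have "(\<Prod>i\<in>A. G i ((p(i0 := a)) i) ((p(i0 := b)) i)) = PG"
      unfolding PG_def using fA(2) by (intro prod.cong refl) auto
    then have "(\<Prod>i<n. G i ((p(i0 := a)) i) ((p(i0 := b)) i)) = G i0 a b * PG"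
      unfolding nA using fA by (simp add: prod.insert)
    ultimately show ?thesis by simp
  qed
  have "H i0 (p i0) (p i0) * PH = G i0 (p i0) (p i0) * PG" using gen p i0 by blast
  then have PH0: "PH \<noteq> 0" using p i0 PG0 by auto
  show ?thesis
  proof (intro exI conjI allI impI)
    show "PG / PH \<noteq> 0" using PG0 PH0 by simp
    fix a b assume "a < m i0" "b < m i0"
    then have "H i0 a b * PH = G i0 a b * PG" by (rule gen)
    then show "H i0 a b = PG / PH * G i0 a b" using PH0 by (simp add: field_simps)
  qed
qed


lemma dm: "b < (k::nat) \<Longrightarrow> (a * k + b) div k = a" "b < (k::nat) \<Longrightarrow> (a * k + b) mod k = b"
  by auto

lemma enc_inj: "b < (k::nat) \<Longrightarrow> b' < k \<Longrightarrow> a * k + b = a' * k + b' \<Longrightarrow> a = a' \<and> b = b'"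
  by (metis dm)

lemma enc_lt: "a < (k::nat) \<Longrightarrow> b < k \<Longrightarrow> a * k + b < k * k"
proof -
  assume a: "a < k" and b: "b < k"
  have "Suc a * k \<le> k * k" using a by (intro mult_le_mono1) simp
  then show ?thesis using b by simp
qed

lemma digit_Suc: "i < n \<Longrightarrow> digit k (Suc n) i y = digit k n i (y div k n)"
proof -
  assume i: "i < n"
  have "{i<..<Suc n} = insert n {i<..<n}" using i by auto
  then have "(\<Prod>j\<in>{i<..<Suc n}. k j) = k n * (\<Prod>j\<in>{i<..<n}. k j)" by simp
  then show ?thesis unfolding digit_def by (simp add: div_mult2_eq)
qed

lemma digit_last: "digit k (Suc n) n y = y mod k n"
proof -
  have "{n<..<Suc n} = {}" by auto
  then show ?thesis unfolding digit_def by simp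
qed

lemma digit_lt: "0 < k i \<Longrightarrow> digit k n i y < k i"
  unfolding digit_def by simp

lemma digit_inj:
  "(\<forall>i<n. 0 < k i) \<Longrightarrow> y < (\<Prod>i<n. k i) \<Longrightarrow> y' < (\<Prod>i<n. k i) \<Longrightarrow>
   (\<forall>i<n. digit k n i y = digit k n i y') \<Longrightarrow> y = y'"
proof (induction n arbitrary: y y')
  case 0
  then show ?case by simp
next
  case (Suc n)
  have P: "(\<Prod>i<Suc n. k i) = (\<Prod>i<n. k i) * k n" by simp
  have "y div k n < (\<Prod>i<n. k i)" "y' div k n < (\<Prod>i<n. k i)"
    using Suc.prems(2,3) unfolding P by (auto intro: less_mult_imp_div_less)
  moreover have "\<forall>i<n. digit k n i (y div k n) = digit k n i (y' div k n)"
  proof (intro allI impI)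
    fix i assume i: "i < n"
    have "digit k (Suc n) i y = digit k (Suc n) i y'" using Suc.prems(4) i by simp
    then show "digit k n i (y div k n) = digit k n i (y' div k n)" unfolding digit_Suc[OF i] .
  qed
  ultimately have "y div k n = y' div k n" using Suc.IH Suc.prems(1) by simp
  moreover have "y mod k n = y' mod k n" using Suc.prems(4) digit_last[of k n] by (metis lessI)
  ultimately show ?case by (metis div_mult_mod_eq)
qed

definition sg :: "nat \<Rightarrow> (nat \<Rightarrow> nat) \<Rightarrow> nat \<Rightarrow> nat \<Rightarrow> nat" where
  "sg n k i r = digit k n i (r div (\<Prod>i<n. k i)) * k i + digit k n i (r mod (\<Prod>i<n. k i))"

lemma sg_lt: "0 < k i \<Longrightarrow> sg n k i r < k i * k i"
  unfolding sg_def by (intro enc_lt digit_lt)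

lemma sg_bij:
  assumes kpos: "\<forall>i<n. 0 < k i"
  defines "K \<equiv> (\<Prod>i<n. k i)"
  shows "bij_betw (\<lambda>r. restrict (\<lambda>i. sg n k i r) {..<n}) {..<K * K} (PiE {..<n} (\<lambda>i. {..<k i * k i}))"
proof -
  have K0: "K > 0" unfolding K_def using kpos by (simp add: prod_pos)
  have inj: "inj_on (\<lambda>r. restrict (\<lambda>i. sg n k i r) {..<n}) {..<K * K}"
  proof (rule inj_onI)
    fix r r' assume r: "r \<in> {..<K * K}" and r': "r' \<in> {..<K * K}"
      and e: "restrict (\<lambda>i. sg n k i r) {..<n} = restrict (\<lambda>i. sg n k i r') {..<n}"
    have "\<forall>i<n. digit k n i (r div K) = digit k n i (r' div K) \<and> digit k n i (r mod K) = digit k n i (r' mod K)"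
    proof (intro allI impI)
      fix i assume i: "i < n"
      have "sg n k i r = sg n k i r'" using fun_cong[OF e, of i] i by simp
      then show "digit k n i (r div K) = digit k n i (r' div K) \<and> digit k n i (r mod K) = digit k n i (r' mod K)"
        unfolding sg_def K_def using digit_lt[of k i n] kpos i by (intro enc_inj) auto
    qed
    moreover have "r div K < K" "r' div K < K" using r r' by (auto simp: less_mult_imp_div_less)
    moreover have "r mod K < K" "r' mod K < K" using K0 by auto
    ultimately have "r div K = r' div K" "r mod K = r' mod K"
      using digit_inj[OF kpos] unfolding K_def by blast+
    then show "r = r'" by (metis div_mult_mod_eq)
  qed
  have sub: "(\<lambda>r. restrict (\<lambda>i. sg n k i r) {..<n}) ` {..<K * K} \<subseteq> PiE {..<n} (\<lambda>i. {..<k i * k i})"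
  proof (rule image_subsetI)
    fix r assume "r \<in> {..<K * K}"
    show "restrict (\<lambda>i. sg n k i r) {..<n} \<in> PiE {..<n} (\<lambda>i. {..<k i * k i})"
      unfolding restrict_PiE_iff using kpos sg_lt by auto
  qed
  have "card ((\<lambda>r. restrict (\<lambda>i. sg n k i r) {..<n}) ` {..<K * K}) = K * K"
    using card_image[OF inj] by simp
  also have "\<dots> = card (PiE {..<n} (\<lambda>i. {..<k i * k i}))"
    by (simp add: card_PiE K_def prod.distrib)
  finally have "(\<lambda>r. restrict (\<lambda>i. sg n k i r) {..<n}) ` {..<K * K} = PiE {..<n} (\<lambda>i. {..<k i * k i})"
    using sub by (intro card_subset_eq) (auto simp: finite_PiE)
  then show ?thesis using inj unfolding bij_betw_def by blast
qed


definition fpt :: "nat \<Rightarrow> (nat \<Rightarrow> nat \<Rightarrow> complex) \<Rightarrow> nat \<Rightarrow> nat \<Rightarrow> complex" where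
  "fpt k M p q = M (p div k * k + q mod k) (q div k * k + p mod k)"

definition frl :: "nat \<Rightarrow> (nat \<Rightarrow> nat \<Rightarrow> complex) \<Rightarrow> nat \<Rightarrow> nat \<Rightarrow> complex" where
  "frl k M p q = M (p div k * k + q div k) (p mod k * k + q mod k)"

definition ent :: "complex mat \<Rightarrow> nat \<Rightarrow> nat \<Rightarrow> complex" where
  "ent A p q = A $$ (p, q)"

lemma dig_dm: "0 < k i \<Longrightarrow> (digit k n i x * k i + digit k n i y) div k i = digit k n i x"
  "0 < k i \<Longrightarrow> (digit k n i x * k i + digit k n i y) mod k i = digit k n i y"
  using dm digit_lt by blast+

lemma TP_fpt:
  assumes kpos: "\<forall>i<n. 0 < k i"
  shows "fpt (\<Prod>i<n. k i) (TP n (sg n k) M) r c = TP n (sg n k) (\<lambda>i. fpt (k i) (M i)) r c"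
proof -
  define K where "K = (\<Prod>i<n. k i)"
  have K0: "0 < K" unfolding K_def using kpos by (simp add: prod_pos)
  have Kd: "(\<Prod>i<n. k i) = K" unfolding K_def ..
  have "TP n (sg n k) M (r div K * K + c mod K) (c div K * K + r mod K) = TP n (sg n k) (\<lambda>i. fpt (k i) (M i)) r c"
    unfolding TP_def
  proof (intro prod.cong refl)
    fix i assume "i \<in> {..<n}"
    then have ki: "0 < k i" using kpos by auto
    have l: "digit k n i x < k i" for x using ki by (simp add: digit_lt)
    have a: "sg n k i (r div K * K + c mod K) = digit k n i (r div K) * k i + digit k n i (c mod K)"
      unfolding sg_def Kd using dm[of "c mod K" K "r div K"] K0 by simp
    have b: "sg n k i (c div K * K + r mod K) = digit k n i (c div K) * k i + digit k n i (r mod K)"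
      unfolding sg_def Kd using dm[of "r mod K" K "c div K"] K0 by simp
    show "M i (sg n k i (r div K * K + c mod K)) (sg n k i (c div K * K + r mod K)) =
          fpt (k i) (M i) (sg n k i r) (sg n k i c)"
      unfolding a b unfolding fpt_def sg_def Kd using dig_dm[of k i n, OF ki] by simp
  qed
  then show ?thesis unfolding fpt_def Kd by (simp add: TP_def)
qed

lemma TP_frl:
  assumes kpos: "\<forall>i<n. 0 < k i" and r: "r < (\<Prod>i<n. k i) * (\<Prod>i<n. k i)" and c: "c < (\<Prod>i<n. k i) * (\<Prod>i<n. k i)"
  shows "frl (\<Prod>i<n. k i) (TP n (sg n k) M) r c = TP n (sg n k) (\<lambda>i. frl (k i) (M i)) r c"
proof -
  define K where "K = (\<Prod>i<n. k i)"
  have K0: "0 < K" unfolding K_def using kpos by (simp add: prod_pos)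
  have Kd: "(\<Prod>i<n. k i) = K" unfolding K_def ..
  have cK: "c div K < K" "r div K < K" using r c unfolding Kd by (auto simp: less_mult_imp_div_less)
  have "TP n (sg n k) M (r div K * K + c div K) (r mod K * K + c mod K) = TP n (sg n k) (\<lambda>i. frl (k i) (M i)) r c"
    unfolding TP_def
  proof (intro prod.cong refl)
    fix i assume "i \<in> {..<n}"
    then have ki: "0 < k i" using kpos by auto
    have l: "digit k n i x < k i" for x using ki by (simp add: digit_lt)
    have a: "sg n k i (r div K * K + c div K) = digit k n i (r div K) * k i + digit k n i (c div K)"
      unfolding sg_def Kd using dm[of "c div K" K "r div K"] cK by simp
    have b: "sg n k i (r mod K * K + c mod K) = digit k n i (r mod K) * k i + digit k n i (c mod K)"
      unfolding sg_def Kd using dm[of "c mod K" K "r mod K"] K0 by simp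
    show "M i (sg n k i (r div K * K + c div K)) (sg n k i (r mod K * K + c mod K)) =
          frl (k i) (M i) (sg n k i r) (sg n k i c)"
      unfolding a b unfolding frl_def sg_def Kd using dig_dm[of k i n, OF ki] by simp
  qed
  then show ?thesis unfolding frl_def Kd by (simp add: TP_def)
qed

lemma ptrans_mat:
  assumes K0: "0 < K"
  shows "ptrans K (mat (K*K) (K*K) (\<lambda>(r,c). F r c)) = mat (K*K) (K*K) (\<lambda>(r,c). fpt K F r c)"
proof (rule eq_matI)
  fix i j assume i: "i < dim_row (mat (K*K) (K*K) (\<lambda>(r,c). fpt K F r c))"
    and j: "j < dim_col (mat (K*K) (K*K) (\<lambda>(r,c). fpt K F r c))"
  have "i div K < K" "j div K < K" using i j by (auto simp: less_mult_imp_div_less)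
  then have "i div K * K + j mod K < K * K" "j div K * K + i mod K < K * K" using K0 by (auto intro!: enc_lt)
  then show "ptrans K (mat (K*K) (K*K) (\<lambda>(r,c). F r c)) $$ (i, j) = mat (K*K) (K*K) (\<lambda>(r,c). fpt K F r c) $$ (i, j)"
    using i j unfolding ptrans_def fpt_def by simp
qed (auto simp: ptrans_def)

lemma realign_mat:
  assumes K0: "0 < K"
  shows "realign K (mat (K*K) (K*K) (\<lambda>(r,c). F r c)) = mat (K*K) (K*K) (\<lambda>(r,c). frl K F r c)"
proof (rule eq_matI)
  fix i j assume i: "i < dim_row (mat (K*K) (K*K) (\<lambda>(r,c). frl K F r c))"
    and j: "j < dim_col (mat (K*K) (K*K) (\<lambda>(r,c). frl K F r c))"
  have "i div K < K" "j div K < K" using i j by (auto simp: less_mult_imp_div_less)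
  then have "i div K * K + j div K < K * K" "i mod K * K + j mod K < K * K" using K0 by (auto intro!: enc_lt)
  then show "realign K (mat (K*K) (K*K) (\<lambda>(r,c). F r c)) $$ (i, j) = mat (K*K) (K*K) (\<lambda>(r,c). frl K F r c) $$ (i, j)"
    using i j unfolding realign_def frl_def by simp
qed (auto simp: realign_def)

lemma ent_ptrans: "A \<in> carrier_mat (k*k) (k*k) \<Longrightarrow> p < k*k \<Longrightarrow> q < k*k \<Longrightarrow> ent (ptrans k A) p q = fpt k (ent A) p q"
  unfolding ent_def ptrans_def fpt_def by simp

lemma ent_realign: "p < k*k \<Longrightarrow> q < k*k \<Longrightarrow> ent (realign k A) p q = frl k (ent A) p q"
  unfolding ent_def realign_def frl_def by simp

lemma ent_eta: "ent A = (\<lambda>i j. A $$ (i, j))"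
  unfolding ent_def by (intro ext) simp

lemma shuffle_TP: "shuffle n k g = mat ((\<Prod>i<n. k i) * (\<Prod>i<n. k i)) ((\<Prod>i<n. k i) * (\<Prod>i<n. k i))
    (\<lambda>(r,c). TP n (sg n k) (\<lambda>i. ent (g i)) r c)"
  unfolding shuffle_def Let_def TP_def sg_def ent_def ..

lemma psd_mat: "psd (mat N N (\<lambda>(r,c). F r c)) \<longleftrightarrow> fpsd N F"
proof -
  have "psd (mat N N (\<lambda>(r,c). F r c)) \<longleftrightarrow> fpsd N (\<lambda>i j. mat N N (\<lambda>(r,c). F r c) $$ (i, j))"
    by (rule psd_fpsd) simp
  also have "\<dots> \<longleftrightarrow> fpsd N F" by (rule fpsd_cong) simp
  finally show ?thesis .
qed

lemma nonzero_diag: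
  assumes carr: "g \<in> carrier_mat (k*k) (k*k)" and ps: "psd g" and na: "\<not> mat_image g \<subseteq> antisym_subspace k"
  shows "\<exists>p<k*k. ent g p p \<noteq> 0"
proof (rule ccontr)
  assume "\<not> (\<exists>p<k*k. ent g p p \<noteq> 0)"
  then have z: "\<forall>p<k*k. ent g p p = 0" by blast
  have f: "fpsd (k*k) (ent g)" unfolding ent_eta using psd_fpsd[OF carr] ps by blast
  have zz: "g $$ (p, q) = 0" if "p < k*k" "q < k*k" for p q
  proof -
    have "ent g p q = 0" by (rule fpsd_zero_diag[OF f that]) (use z that in blast)
    then show ?thesis unfolding ent_def .
  qed
  have "mat_image g \<subseteq> antisym_subspace k"
  proof
    fix x assume "x \<in> mat_image g"
    then obtain v where v: "v \<in> carrier_vec (dim_col g)" and x: "x = g *\<^sub>v v" unfolding mat_image_def by auto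
    have xi: "x $ i = 0" if "i < k*k" for i
    proof -
      have "x $ i = row g i \<bullet> v" using x that carr by simp
      also have "\<dots> = 0" unfolding scalar_prod_def
      proof (intro sum.neutral ballI)
        fix j assume "j \<in> {0..<dim_vec v}"
        then have j: "j < k*k" using v carr by auto
        then show "row g i $ j * v $ j = 0" using zz[OF that j] that carr by simp
      qed
      finally show ?thesis .
    qed
    have "x \<in> carrier_vec (k*k)" unfolding carrier_vec_def using x carr by simp
    moreover have "\<forall>a < k. \<forall>b < k. x $ (b * k + a) = - (x $ (a * k + b))"
    proof (intro allI impI)
      fix a b assume a: "a < k" and b: "b < k"
      have "b * k + a < k * k" using b a by (rule enc_lt)
      moreover have "a * k + b < k * k" using a b by (rule enc_lt)
      ultimately show "x $ (b * k + a) = - (x $ (a * k + b))" using xi by simp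
    qed
    ultimately show "x \<in> antisym_subspace k" unfolding antisym_subspace_def by blast
  qed
  then show False using na by blast
qed

lemma diag_info: "fpsd m G \<Longrightarrow> d < m \<Longrightarrow> Im (G d d) = 0 \<and> 0 \<le> Re (G d d)"
proof -
  assume f: "fpsd m G" and d: "d < m"
  have e: "G d d = complex_of_real (Re (G d d))" using fpsd_diag(1)[OF f d] .
  have "Im (G d d) = 0" by (subst e) (rule Im_complex_of_real)
  then show ?thesis using fpsd_diag(2)[OF f d] by simp
qed

lemma rf: "0 < k \<Longrightarrow> y < k*k \<Longrightarrow> frl k (fpt k G) x y = G (x div k * k + y mod k) (x mod k * k + y div k)"
proof -
  assume k: "0 < k" and y: "y < k*k"
  have yk: "y div k < k" using y by (auto simp: less_mult_imp_div_less)
  have ym: "y mod k < k" using k by simp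
  have 1: "(x div k * k + y div k) div k = x div k" "(x div k * k + y div k) mod k = y div k"
    using dm[OF yk] by blast+
  have 2: "(x mod k * k + y mod k) div k = x mod k" "(x mod k * k + y mod k) mod k = y mod k"
    using dm[OF ym] by blast+
  show ?thesis unfolding frl_def fpt_def 1 2 ..
qed


lemma frl_invol:
  assumes k: "0 < k" and a: "a < k*k" and b: "b < k*k"
  shows "frl k (frl k G) a b = G a b"
proof -
  have ak: "b div k < k" using b by (auto simp: less_mult_imp_div_less)
  have bm: "b mod k < k" using k by simp
  have 1: "(a div k * k + b div k) div k = a div k" "(a div k * k + b div k) mod k = b div k"
    using dm[OF ak] by blast+
  have 2: "(a mod k * k + b mod k) div k = a mod k" "(a mod k * k + b mod k) mod k = b mod k"
    using dm[OF bm] by blast+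
  have "frl k (frl k G) a b = G (a div k * k + a mod k) (b div k * k + b mod k)"
    unfolding frl_def 1 2 ..
  also have "\<dots> = G a b" by simp
  finally show ?thesis .
qed

lemma frl_idx_lt:
  assumes k: "0 < (k::nat)" and a: "a < k*k" and b: "b < k*k"
  shows "a div k * k + b div k < k*k" "a mod k * k + b mod k < k*k"
proof -
  have ak1: "a div k < k" by (rule less_mult_imp_div_less[OF a])
  have ak2: "b div k < k" by (rule less_mult_imp_div_less[OF b])
  show "a div k * k + b div k < k*k" using ak1 ak2 by (rule enc_lt)
  show "a mod k * k + b mod k < k*k" using k by (intro enc_lt) auto
qed

lemma rl_scalar:
  assumes f: "fpsd (k*k) G" and k: "0 < k" and p: "p < k*k" "G p p \<noteq> 0"
    and z: "\<forall>a<k*k. \<forall>b<k*k. frl k G a b = z * G a b"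
  shows "\<forall>a<k*k. \<forall>b<k*k. frl k G a b = G a b"
proof -
  define u where "u = p div k * k + p div k"
  define v where "v = p mod k * k + p mod k"
  have uv: "u < k*k" "v < k*k" unfolding u_def v_def using frl_idx_lt[OF k p(1) p(1)] by auto
  have fp: "frl k G p p = G u v" unfolding frl_def u_def v_def ..
  have "G p p = frl k (frl k G) p p" using frl_invol[OF k p(1) p(1)] by simp
  also have "\<dots> = frl k G u v" unfolding frl_def u_def v_def ..
  also have "\<dots> = z * G u v" using z uv by blast
  also have "\<dots> = z * (z * G p p)" using z p(1) fp by simp
  finally have "G p p * 1 = G p p * (z * z)" by (simp add: algebra_simps)
  then have zz: "z * z = 1" using p(2) by (metis mult_left_cancel)
  have "z \<noteq> -1"
  proof
    assume zm: "z = -1"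
    have dz: "G (c * k + c) (c * k + c) = 0" if c: "c < k" for c
    proof -
      have ck: "c * k + c < k * k" using c c by (rule enc_lt)
      have "(c * k + c) div k = c" "(c * k + c) mod k = c" using dm[OF c] by blast+
      then have "frl k G (c * k + c) (c * k + c) = G (c * k + c) (c * k + c)" unfolding frl_def by simp
      moreover have "frl k G (c * k + c) (c * k + c) = - G (c * k + c) (c * k + c)" using z zm ck by simp
      ultimately show ?thesis by simp
    qed
    have "p div k < k" using p(1) by (auto simp: less_mult_imp_div_less)
    have "p mod k < k" using k by simp
    have "G v v = 0" unfolding v_def using dz[OF \<open>p mod k < k\<close>] .
    then have "G u v = 0" using fpsd_zero_diag[OF f uv(1) uv(2)] by simp
    then have "frl k G p p = 0" using fp by simp
    moreover have "frl k G p p = - G p p" using z zm p(1) by simp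
    ultimately show False using p(2) by simp
  qed
  moreover have "z = 1 \<or> z = -1" using zz by (metis square_eq_1_iff)
  ultimately have "z = 1" by blast
  then show ?thesis using z by simp
qed

lemma pt_w:
  assumes f: "fpsd (k*k) G" and k: "0 < k" and p: "p < k*k" "G p p \<noteq> 0"
  shows "Im (Q (k*k) (fpt k G) (\<lambda>j. if j = p then 1 else 0)) = 0 \<and>
         0 < Re (Q (k*k) (fpt k G) (\<lambda>j. if j = p then 1 else 0))"
proof -
  have "Q (k*k) (fpt k G) (\<lambda>j. if j = p then 1 else 0) = fpt k G p p"
    using p(1) by (subst Q_one[of p]) auto
  also have "\<dots> = G p p" unfolding fpt_def by simp
  finally have e: "Q (k*k) (fpt k G) (\<lambda>j. if j = p then 1 else 0) = G p p" .
  have "Im (G p p) = 0 \<and> 0 \<le> Re (G p p)" by (rule diag_info[OF f p(1)])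
  moreover have "Re (G p p) \<noteq> 0" using p(2) calculation by (simp add: complex_eq_iff)
  ultimately show ?thesis unfolding e by simp
qed

lemma rt_w:
  assumes f: "fpsd (k*k) G" and k: "0 < k" and p: "p < k*k" "G p p \<noteq> 0"
  shows "\<exists>w. Im (Q (k*k) (frl k (fpt k G)) w) = 0 \<and> 0 < Re (Q (k*k) (frl k (fpt k G)) w)"
proof -
  define a where "a = p div k"
  define b where "b = p mod k"
  have ab: "a < k" "b < k" unfolding a_def b_def using p(1) k by (auto simp: less_mult_imp_div_less)
  have pe: "p = a * k + b" unfolding a_def b_def by simp
  have D: "Im (G d d) = 0 \<and> 0 \<le> Re (G d d)" if "d < k*k" for d by (rule diag_info[OF f that])
  have Dp: "0 < Re (G p p)"
  proof -
    have "Re (G p p) \<noteq> 0" using p(2) D[OF p(1)] by (simp add: complex_eq_iff)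
    then show ?thesis using D[OF p(1)] by simp
  qed
  define x1 where "x1 = a * k + a"
  define x2 where "x2 = b * k + b"
  have x12: "x1 < k*k" "x2 < k*k" unfolding x1_def x2_def using ab by (auto intro: enc_lt)
  have dmab: "x1 div k = a" "x1 mod k = a" "x2 div k = b" "x2 mod k = b"
    unfolding x1_def x2_def using dm ab by auto
  have R11: "frl k (fpt k G) x1 x1 = G x1 x1" using rf[OF k x12(1)] dmab by (simp add: x1_def)
  have R22: "frl k (fpt k G) x2 x2 = G x2 x2" using rf[OF k x12(2)] dmab by (simp add: x2_def)
  have R12: "frl k (fpt k G) x1 x2 = G p p" using rf[OF k x12(2)] dmab pe by simp
  have R21: "frl k (fpt k G) x2 x1 = G (b * k + a) (b * k + a)" using rf[OF k x12(1)] dmab by simp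
  show ?thesis
  proof (cases "a = b")
    case True
    then have "x1 = p" unfolding x1_def using pe by simp
    have "Q (k*k) (frl k (fpt k G)) (\<lambda>j. if j = x1 then 1 else 0) = frl k (fpt k G) x1 x1"
      using x12(1) by (subst Q_one[of x1]) auto
    also have "\<dots> = G p p" using R11 \<open>x1 = p\<close> by simp
    finally show ?thesis using D[OF p(1)] Dp by (intro exI[of _ "\<lambda>j. if j = x1 then 1 else 0"]) simp
  next
    case False
    then have ne: "x1 \<noteq> x2" using dmab by metis
    have ba: "b * k + a < k*k" using ab by (intro enc_lt)
    have "Q (k*k) (frl k (fpt k G)) (\<lambda>j. if j = x1 \<or> j = x2 then 1 else 0)
        = G x1 x1 + G p p + G (b * k + a) (b * k + a) + G x2 x2"
      using x12 ne R11 R22 R12 R21 by (subst Q_two[of x1 "k*k" x2]) auto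
    moreover have "Im (G x1 x1 + G p p + G (b * k + a) (b * k + a) + G x2 x2) = 0"
      using D[OF x12(1)] D[OF x12(2)] D[OF p(1)] D[OF ba] by simp
    moreover have "0 < Re (G x1 x1 + G p p + G (b * k + a) (b * k + a) + G x2 x2)"
      using D[OF x12(1)] D[OF x12(2)] Dp D[OF ba] by simp
    ultimately show ?thesis by (intro exI[of _ "\<lambda>j. if j = x1 \<or> j = x2 then 1 else 0"]) simp
  qed
qed


lemma TP_cong: "(\<And>i r c. i < n \<Longrightarrow> M i (s i r) (s i c) = M' i (s i r) (s i c)) \<Longrightarrow> TP n s M r c = TP n s M' r c"
  unfolding TP_def by (intro prod.cong refl) auto

theorem mainTheorem16:
  fixes n :: nat and k :: "nat \<Rightarrow> nat" and g :: "nat \<Rightarrow> complex mat"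
  assumes carr: "\<And>i. i < n \<Longrightarrow> g i \<in> carrier_mat (k i * k i) (k i * k i)"
    and state: "\<And>i. i < n \<Longrightarrow> psd (g i)"
    and notanti: "\<And>i. i < n \<Longrightarrow> \<not> mat_image (g i) \<subseteq> antisym_subspace (k i)"
  shows "(psd (ptrans (\<Prod>i<n. k i) (shuffle n k g)) \<longleftrightarrow>
            (\<forall>i < n. psd (ptrans (k i) (g i))))
       \<and> (psd (realign (\<Prod>i<n. k i) (ptrans (\<Prod>i<n. k i) (shuffle n k g))) \<longleftrightarrow>
            (\<forall>i < n. psd (realign (k i) (ptrans (k i) (g i)))))
       \<and> (realign (\<Prod>i<n. k i) (shuffle n k g) = shuffle n k g \<longleftrightarrow>
            (\<forall>i < n. realign (k i) (g i) = g i))"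
proof -
  define K where "K = (\<Prod>i<n. k i)"
  have Kd: "(\<Prod>i<n. k i) = K" unfolding K_def ..
  have nz: "\<exists>p<k i * k i. ent (g i) p p \<noteq> 0" if "i < n" for i
    using nonzero_diag[OF carr[OF that] state[OF that] notanti[OF that]] .
  have kpos: "\<forall>i<n. 0 < k i"
  proof (intro allI impI)
    fix i assume "i < n"
    then obtain p where "p < k i * k i" using nz by blast
    then show "0 < k i" by (cases "k i") auto
  qed
  have K0: "0 < K" unfolding K_def using kpos by (simp add: prod_pos)
  obtain p where p: "\<forall>i<n. p i < k i * k i \<and> ent (g i) (p i) (p i) \<noteq> 0"
    using nz by metis
  have fG: "fpsd (k i * k i) (ent (g i))" if "i < n" for i
    unfolding ent_eta using psd_fpsd[OF carr[OF that]] state[OF that] by blast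
  have bij: "bij_betw (\<lambda>r. restrict (\<lambda>i. sg n k i r) {..<n}) {..<K * K} (PiE {..<n} (\<lambda>i. {..<k i * k i}))"
    using sg_bij[OF kpos] unfolding Kd .
  have sm: "\<forall>i<n. \<forall>r<K * K. sg n k i r < k i * k i" using kpos sg_lt by blast
  have S: "shuffle n k g = mat (K*K) (K*K) (\<lambda>(r,c). TP n (sg n k) (\<lambda>i. ent (g i)) r c)"
    using shuffle_TP[of n k g] unfolding Kd .
  define Pt where "Pt i = fpt (k i) (ent (g i))" for i
  define Rt where "Rt i = frl (k i) (Pt i)" for i
  define Fr where "Fr i = frl (k i) (ent (g i))" for i
  have SP: "ptrans K (shuffle n k g) = mat (K*K) (K*K) (\<lambda>(r,c). TP n (sg n k) Pt r c)"
  proof -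
    have "ptrans K (shuffle n k g) = mat (K*K) (K*K) (\<lambda>(r,c). fpt K (TP n (sg n k) (\<lambda>i. ent (g i))) r c)"
      unfolding S by (rule ptrans_mat[OF K0])
    also have "\<dots> = mat (K*K) (K*K) (\<lambda>(r,c). TP n (sg n k) Pt r c)"
      using TP_fpt[OF kpos, of "\<lambda>i. ent (g i)"] unfolding Kd Pt_def by simp
    finally show ?thesis .
  qed
  have RSP: "realign K (ptrans K (shuffle n k g)) = mat (K*K) (K*K) (\<lambda>(r,c). TP n (sg n k) Rt r c)"
  proof -
    have "realign K (ptrans K (shuffle n k g)) = mat (K*K) (K*K) (\<lambda>(r,c). frl K (TP n (sg n k) Pt) r c)"
      unfolding SP by (rule realign_mat[OF K0])
    also have "\<dots> = mat (K*K) (K*K) (\<lambda>(r,c). TP n (sg n k) Rt r c)"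
    proof (rule eq_matI)
      fix i j assume i: "i < dim_row (mat (K*K) (K*K) (\<lambda>(r,c). TP n (sg n k) Rt r c))"
        and j: "j < dim_col (mat (K*K) (K*K) (\<lambda>(r,c). TP n (sg n k) Rt r c))"
      have "frl K (TP n (sg n k) Pt) i j = TP n (sg n k) Rt i j"
        using TP_frl[OF kpos, of i j Pt] i j unfolding Kd Rt_def by simp
      then show "mat (K*K) (K*K) (\<lambda>(r,c). frl K (TP n (sg n k) Pt) r c) $$ (i, j) =
                 mat (K*K) (K*K) (\<lambda>(r,c). TP n (sg n k) Rt r c) $$ (i, j)" using i j by simp
    qed auto
    finally show ?thesis .
  qed
  have RS: "realign K (shuffle n k g) = mat (K*K) (K*K) (\<lambda>(r,c). TP n (sg n k) Fr r c)"
  proof -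
    have "realign K (shuffle n k g) = mat (K*K) (K*K) (\<lambda>(r,c). frl K (TP n (sg n k) (\<lambda>i. ent (g i))) r c)"
      unfolding S by (rule realign_mat[OF K0])
    also have "\<dots> = mat (K*K) (K*K) (\<lambda>(r,c). TP n (sg n k) Fr r c)"
    proof (rule eq_matI)
      fix i j assume i: "i < dim_row (mat (K*K) (K*K) (\<lambda>(r,c). TP n (sg n k) Fr r c))"
        and j: "j < dim_col (mat (K*K) (K*K) (\<lambda>(r,c). TP n (sg n k) Fr r c))"
      have "frl K (TP n (sg n k) (\<lambda>i. ent (g i))) i j = TP n (sg n k) Fr i j"
        using TP_frl[OF kpos, of i j "\<lambda>i. ent (g i)"] i j unfolding Kd Fr_def by simp
      then show "mat (K*K) (K*K) (\<lambda>(r,c). frl K (TP n (sg n k) (\<lambda>i. ent (g i))) r c) $$ (i, j) =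
                 mat (K*K) (K*K) (\<lambda>(r,c). TP n (sg n k) Fr r c) $$ (i, j)" using i j by simp
    qed auto
    finally show ?thesis .
  qed
  have fPt: "psd (ptrans (k i) (g i)) \<longleftrightarrow> fpsd (k i * k i) (Pt i)" if i: "i < n" for i
  proof -
    have c: "ptrans (k i) (g i) \<in> carrier_mat (k i * k i) (k i * k i)"
      using carr[OF i] unfolding ptrans_def by auto
    have "psd (ptrans (k i) (g i)) \<longleftrightarrow> fpsd (k i * k i) (ent (ptrans (k i) (g i)))"
      unfolding ent_eta by (rule psd_fpsd[OF c])
    also have "\<dots> \<longleftrightarrow> fpsd (k i * k i) (Pt i)"
      unfolding Pt_def by (rule fpsd_cong) (rule ent_ptrans[OF carr[OF i]])
    finally show ?thesis .
  qed
  have fRt: "psd (realign (k i) (ptrans (k i) (g i))) \<longleftrightarrow> fpsd (k i * k i) (Rt i)" if i: "i < n" for i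
  proof -
    have c: "realign (k i) (ptrans (k i) (g i)) \<in> carrier_mat (k i * k i) (k i * k i)"
      unfolding realign_def by auto
    have "psd (realign (k i) (ptrans (k i) (g i))) \<longleftrightarrow> fpsd (k i * k i) (ent (realign (k i) (ptrans (k i) (g i))))"
      unfolding ent_eta by (rule psd_fpsd[OF c])
    also have "\<dots> \<longleftrightarrow> fpsd (k i * k i) (Rt i)"
    proof (rule fpsd_cong)
      fix a b assume a: "a < k i * k i" and b: "b < k i * k i"
      have ki: "0 < k i" using kpos i by blast
      have "ent (realign (k i) (ptrans (k i) (g i))) a b = frl (k i) (ent (ptrans (k i) (g i))) a b"
        by (rule ent_realign[OF a b])
      also have "\<dots> = frl (k i) (Pt i) a b"
        unfolding frl_def Pt_def using frl_idx_lt[OF ki a b] by (intro ent_ptrans[OF carr[OF i]])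
      finally show "ent (realign (k i) (ptrans (k i) (g i))) a b = Rt i a b" unfolding Rt_def .
    qed
    finally show ?thesis .
  qed
  have wPt: "\<forall>i<n. Im (Q (k i * k i) (Pt i) (\<lambda>j. if j = p i then 1 else 0)) = 0 \<and>
        0 < Re (Q (k i * k i) (Pt i) (\<lambda>j. if j = p i then 1 else 0))"
    unfolding Pt_def using pt_w fG kpos p by blast
  have "\<forall>i. \<exists>w. i < n \<longrightarrow> Im (Q (k i * k i) (Rt i) w) = 0 \<and> 0 < Re (Q (k i * k i) (Rt i) w)"
  proof
    fix i show "\<exists>w. i < n \<longrightarrow> Im (Q (k i * k i) (Rt i) w) = 0 \<and> 0 < Re (Q (k i * k i) (Rt i) w)"
    proof (cases "i < n")
      case True
      then show ?thesis unfolding Rt_def Pt_def using rt_w[OF fG[OF True]] kpos p by blast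
    qed simp
  qed
  then obtain wR where wR: "\<forall>i<n. Im (Q (k i * k i) (Rt i) (wR i)) = 0 \<and> 0 < Re (Q (k i * k i) (Rt i) (wR i))"
    by metis
  have P1: "psd (ptrans K (shuffle n k g)) \<longleftrightarrow> (\<forall>i < n. psd (ptrans (k i) (g i)))"
  proof -
    have "psd (ptrans K (shuffle n k g)) \<longleftrightarrow> fpsd (K*K) (TP n (sg n k) Pt)"
      unfolding SP by (rule psd_mat)
    also have "\<dots> \<longleftrightarrow> (\<forall>i<n. fpsd (k i * k i) (Pt i))"
    proof
      assume "fpsd (K*K) (TP n (sg n k) Pt)"
      then show "\<forall>i<n. fpsd (k i * k i) (Pt i)"
        using tensor_psd_rev[OF bij wPt] by blast
    next
      assume "\<forall>i<n. fpsd (k i * k i) (Pt i)"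
      then show "fpsd (K*K) (TP n (sg n k) Pt)" using tensor_psd[OF sm] by blast
    qed
    also have "\<dots> \<longleftrightarrow> (\<forall>i < n. psd (ptrans (k i) (g i)))" using fPt by blast
    finally show ?thesis .
  qed
  have P2: "psd (realign K (ptrans K (shuffle n k g))) \<longleftrightarrow> (\<forall>i < n. psd (realign (k i) (ptrans (k i) (g i))))"
  proof -
    have "psd (realign K (ptrans K (shuffle n k g))) \<longleftrightarrow> fpsd (K*K) (TP n (sg n k) Rt)"
      unfolding RSP by (rule psd_mat)
    also have "\<dots> \<longleftrightarrow> (\<forall>i<n. fpsd (k i * k i) (Rt i))"
    proof
      assume "fpsd (K*K) (TP n (sg n k) Rt)"
      then show "\<forall>i<n. fpsd (k i * k i) (Rt i)"
        using tensor_psd_rev[OF bij wR] by blast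
    next
      assume "\<forall>i<n. fpsd (k i * k i) (Rt i)"
      then show "fpsd (K*K) (TP n (sg n k) Rt)" using tensor_psd[OF sm] by blast
    qed
    also have "\<dots> \<longleftrightarrow> (\<forall>i < n. psd (realign (k i) (ptrans (k i) (g i))))" using fRt by blast
    finally show ?thesis .
  qed
  have P3: "realign K (shuffle n k g) = shuffle n k g \<longleftrightarrow> (\<forall>i < n. realign (k i) (g i) = g i)"
  proof -
    have fac: "realign (k i) (g i) = g i \<longleftrightarrow> (\<forall>a<k i * k i. \<forall>b<k i * k i. Fr i a b = ent (g i) a b)"
      if i: "i < n" for i
    proof
      assume "realign (k i) (g i) = g i"
      then show "\<forall>a<k i * k i. \<forall>b<k i * k i. Fr i a b = ent (g i) a b"
        unfolding Fr_def using ent_realign by metis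
    next
      assume H: "\<forall>a<k i * k i. \<forall>b<k i * k i. Fr i a b = ent (g i) a b"
      show "realign (k i) (g i) = g i"
      proof (rule eq_matI)
        fix a b assume a: "a < dim_row (g i)" and b: "b < dim_col (g i)"
        then have a': "a < k i * k i" and b': "b < k i * k i" using carr[OF i] by auto
        have "realign (k i) (g i) $$ (a, b) = ent (realign (k i) (g i)) a b" unfolding ent_def ..
        also have "\<dots> = Fr i a b" unfolding Fr_def by (rule ent_realign[OF a' b'])
        also have "\<dots> = g i $$ (a, b)" using H a' b' unfolding ent_def by blast
        finally show "realign (k i) (g i) $$ (a, b) = g i $$ (a, b)" .
      qed (use carr[OF i] in \<open>auto simp: realign_def\<close>)
    qed
    have "realign K (shuffle n k g) = shuffle n k g \<longleftrightarrow>
        (\<forall>r<K*K. \<forall>c<K*K. TP n (sg n k) Fr r c = TP n (sg n k) (\<lambda>i. ent (g i)) r c)"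
    proof
      assume "realign K (shuffle n k g) = shuffle n k g"
      then have e: "mat (K*K) (K*K) (\<lambda>(r,c). TP n (sg n k) Fr r c) = mat (K*K) (K*K) (\<lambda>(r,c). TP n (sg n k) (\<lambda>i. ent (g i)) r c)"
        unfolding RS S[symmetric] .
      show "\<forall>r<K*K. \<forall>c<K*K. TP n (sg n k) Fr r c = TP n (sg n k) (\<lambda>i. ent (g i)) r c"
      proof (intro allI impI)
        fix r c assume "r < K*K" "c < K*K"
        then show "TP n (sg n k) Fr r c = TP n (sg n k) (\<lambda>i. ent (g i)) r c"
          using arg_cong[OF e, of "\<lambda>A. A $$ (r, c)"] by simp
      qed
    next
      assume H: "\<forall>r<K*K. \<forall>c<K*K. TP n (sg n k) Fr r c = TP n (sg n k) (\<lambda>i. ent (g i)) r c"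
      show "realign K (shuffle n k g) = shuffle n k g" unfolding RS unfolding S
        by (rule eq_matI) (use H in auto)
    qed
    also have "\<dots> \<longleftrightarrow> (\<forall>i<n. \<forall>a<k i * k i. \<forall>b<k i * k i. Fr i a b = ent (g i) a b)"
    proof
      assume H: "\<forall>r<K*K. \<forall>c<K*K. TP n (sg n k) Fr r c = TP n (sg n k) (\<lambda>i. ent (g i)) r c"
      show "\<forall>i<n. \<forall>a<k i * k i. \<forall>b<k i * k i. Fr i a b = ent (g i) a b"
      proof (rule allI, rule impI)
        fix i assume i: "i < n"
        obtain z where z: "z \<noteq> 0" "\<forall>a<k i * k i. \<forall>b<k i * k i. Fr i a b = z * ent (g i) a b"
          using TP_scalar[OF bij _ H i, of p] p by blast
        have ki: "0 < k i" using kpos i by blast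
        show "\<forall>a<k i * k i. \<forall>b<k i * k i. Fr i a b = ent (g i) a b"
          unfolding Fr_def by (rule rl_scalar[OF fG[OF i] ki, of "p i" z]) (use p i z in \<open>auto simp: Fr_def\<close>)
      qed
    next
      assume H: "\<forall>i<n. \<forall>a<k i * k i. \<forall>b<k i * k i. Fr i a b = ent (g i) a b"
      show "\<forall>r<K*K. \<forall>c<K*K. TP n (sg n k) Fr r c = TP n (sg n k) (\<lambda>i. ent (g i)) r c"
      proof (intro allI impI)
        fix r c assume r: "r < K*K" and c: "c < K*K"
        show "TP n (sg n k) Fr r c = TP n (sg n k) (\<lambda>i. ent (g i)) r c"
          unfolding TP_def
        proof (intro prod.cong refl)
          fix i assume "i \<in> {..<n}"
          then have i: "i < n" by simp
          then have "sg n k i r < k i * k i" "sg n k i c < k i * k i" using sm r c by blast+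
          then show "Fr i (sg n k i r) (sg n k i c) = ent (g i) (sg n k i r) (sg n k i c)" using H i by blast
        qed
      qed
    qed
    also have "\<dots> \<longleftrightarrow> (\<forall>i < n. realign (k i) (g i) = g i)" using fac by blast
    finally show ?thesis .
  qed
  show ?thesis unfolding Kd using P1 P2 P3 by blast
qed

end
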